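(* Fix $n\ge1$. The set $\mathcal S_n=\{H\in\mathcal H: X_n(H)=0,\ H^{(n)}=z^n\}$ coincides with the set of $H\in\mathcal H$ satisfying $H^{(n)}=z^n$ and $$H^{(j+n)}=z^nH^{(j)}-\sum_{l=1}^{n}H^j_lH^{(n-l)}\qquad\text{for all }j\ge0.$$ In particular, the map $H\mapsto(H^{(1)},\dots,H^{(n-1)})$ is a bijection from $\mathcal S_n$ onto the set of $(n-1)$-tuples of Laurent series of the form $H^{(a)}=z^a+\sum_{l\ge1}H^a_lz^{-l}$ (with arbitrary coefficients).
   Context: Let $z$ be a formal variable and $\mathcal L$ the space of formal Laurent series $\sum_{j\le N} l_j z^j$ (finitely many positive powers of $z$). Let $\mathcal H$ be the set of sequences $H=(H^{(k)})_{k\ge0}$ of elements of $\mathcal L$ with $H^{(0)}=1$ and, for $k\ge1$, $H^{(k)}=z^k+\sum_{l\ge1}H^k_l z^{-l}$; the coefficients $H^k_l$ are coordinates on $\mathcal H$, and we set $H^0_l=0$. The central system (CS) is the family of vector fields $X_j$, $j\ge1$, on $\mathcal H$, with associated times $t_j$, defined by $$\frac{\partial H^{(k)}}{\partial t_j}=H^{(j+k)}-H^{(j)}H^{(k)}+\sum_{l=1}^{k}H^j_lH^{(k-l)}+\sum_{l=1}^{j}H^k_lH^{(j-l)},\qquad k\ge0;$$ the right-hand side contains only negative powers of $z$, so this determines the components $X_j(H^k_l)$. *)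

theory Defs
  imports "HOL-Computational_Algebra.Formal_Laurent_Series"
begin

text \<open>Representation of the space L of formal Laurent series in z with finitely many
positive powers of z: we use the library type of formal Laurent series in w = 1/z
(finitely many negative powers of w).  Hence z is fls_X_inv, and the coefficient of
z^j of a series f is fls_nth f (-j).\<close>

abbreviation zvar :: "complex fls" where "zvar \<equiv> fls_X_inv"

text \<open>A point H of the space of sequences is given by its coordinates c k l = H^k_l
(k \<ge> 1, l \<ge> 1).  Coordinates with k = 0 or l = 0 do not exist; they are normalised
to 0 (this also realises the convention H^0_l = 0).\<close>

definition Hspace :: "(nat \<Rightarrow> nat \<Rightarrow> complex) set" where
  "Hspace = {c. (\<forall>l. c 0 l = 0) \<and> (\<forall>k. c k 0 = 0)}"

definition tail :: "(nat \<Rightarrow> complex) \<Rightarrow> complex fls" where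
  "tail a = Abs_fls (\<lambda>i. if i \<ge> 1 then a (nat i) else 0)"

definition Hser :: "(nat \<Rightarrow> nat \<Rightarrow> complex) \<Rightarrow> nat \<Rightarrow> complex fls" where
  "Hser c k = (if k = 0 then 1 else zvar ^ k + tail (c k))"

text \<open>Right-hand side of the central system equation for dH^(k)/dt_j.\<close>
definition CS_rhs :: "(nat \<Rightarrow> nat \<Rightarrow> complex) \<Rightarrow> nat \<Rightarrow> nat \<Rightarrow> complex fls" where
  "CS_rhs c j k = Hser c (j + k) - Hser c j * Hser c k
     + (\<Sum>l=1..k. fls_const (c j l) * Hser c (k - l))
     + (\<Sum>l=1..j. fls_const (c k l) * Hser c (j - l))"

definition X_comp :: "nat \<Rightarrow> (nat \<Rightarrow> nat \<Rightarrow> complex) \<Rightarrow> nat \<Rightarrow> nat \<Rightarrow> complex" where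
  "X_comp j c k l = fls_nth (CS_rhs c j k) (int l)"

definition X_zero :: "nat \<Rightarrow> (nat \<Rightarrow> nat \<Rightarrow> complex) \<Rightarrow> bool" where
  "X_zero j c \<longleftrightarrow> (\<forall>k\<ge>1. \<forall>l\<ge>1. X_comp j c k l = 0)"

definition S_set :: "nat \<Rightarrow> (nat \<Rightarrow> nat \<Rightarrow> complex) set" where
  "S_set n = {c \<in> Hspace. X_zero n c \<and> Hser c n = zvar ^ n}"

definition Lform :: "nat \<Rightarrow> complex fls set" where
  "Lform a = {f. fls_nth f (- int a) = 1 \<and> (\<forall>i. i < 1 \<and> i \<noteq> - int a \<longrightarrow> fls_nth f i = 0)}"

end

theory Submission
  imports Defs
begin

lemma tail_nth: "fls_nth (tail a) i = (if i \<ge> 1 then a (nat i) else 0)"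
  unfolding tail_def
  by (subst Abs_fls_inverse) auto

lemma Hser_nth:
  assumes "c \<in> Hspace"
  shows "fls_nth (Hser c k) i = (if i = - int k then 1 else 0) + (if i \<ge> 1 then c k (nat i) else 0)"
  using assms by (auto simp: Hser_def tail_nth Hspace_def)

lemma Hser_coeff:
  assumes "c \<in> Hspace" "l \<ge> 1"
  shows "c k l = fls_nth (Hser c k) (int l)"
  using assms by (simp add: Hser_nth)

lemma zmul_nth: "fls_nth (zvar ^ n * f) i = fls_nth f (i + int n)"
  by (simp add: fls_X_inv_power_times_conv_shift)

lemma sum_delta_aux:
  fixes g :: "nat \<Rightarrow> complex"
  assumes "i \<le> 0"
  shows "(\<Sum>l=1..n. g l * (if i = - int (n - l) then 1 else 0)) =
         (if i + int n \<ge> 1 then g (nat (i + int n)) else 0)"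
proof -
  have "(\<Sum>l=1..n. g l * (if i = - int (n - l) then 1 else 0)) =
        (\<Sum>l\<in>{1..n}. if l = nat (i + int n) then g l else 0)"
    by (rule sum.cong) (use assms in auto)
  also have "\<dots> = (if i + int n \<ge> 1 then g (nat (i + int n)) else 0)"
    using assms by (simp add: sum.delta) linarith
  finally show ?thesis .
qed

lemma R_low:
  assumes c: "c \<in> Hspace" and n: "n \<ge> 1" and i: "i \<le> 0"
  shows "fls_nth (Hser c (n + k) - zvar ^ n * Hser c k
           + (\<Sum>l=1..n. fls_const (c k l) * Hser c (n - l))) i = 0"
proof -
  have s: "fls_nth (\<Sum>l=1..n. fls_const (c k l) * Hser c (n - l)) i
      = (\<Sum>l=1..n. c k l * (if i = - int (n - l) then 1 else 0))"
    unfolding fls_nth_sum using i by (intro sum.cong) (auto simp: Hser_nth[OF c])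
  show ?thesis
    unfolding fls_minus_nth fls_plus_nth zmul_nth s sum_delta_aux[OF i]
    using c n i by (auto simp: Hser_nth Hspace_def)
qed

lemma char:
  assumes c: "c \<in> Hspace" and n: "n \<ge> 1" and hn: "Hser c n = zvar ^ n"
  shows "X_zero n c \<longleftrightarrow> (\<forall>j. Hser c (j + n) = zvar ^ n * Hser c j
                   - (\<Sum>l=1..n. fls_const (c j l) * Hser c (n - l)))"
proof -
  define R where "R k = Hser c (n + k) - zvar ^ n * Hser c k
           + (\<Sum>l=1..n. fls_const (c k l) * Hser c (n - l))" for k
  have cn: "c n l = 0" for l
  proof (cases "l \<ge> 1")
    case True
    then show ?thesis using Hser_coeff[OF c True, of n] hn by simp
  next
    case False
    then have "l = 0" by simp
    then show ?thesis using c by (simp add: Hspace_def)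
  qed
  have c0: "c 0 l = 0" for l using c by (simp add: Hspace_def)
  have CS: "CS_rhs c n k = R k" for k
    unfolding CS_rhs_def R_def hn cn by simp
  have Req: "R j = 0 \<longleftrightarrow> Hser c (j + n) = zvar ^ n * Hser c j
                   - (\<Sum>l=1..n. fls_const (c j l) * Hser c (n - l))" for j
  proof -
    have "R j = Hser c (j + n) - (zvar ^ n * Hser c j
                   - (\<Sum>l=1..n. fls_const (c j l) * Hser c (n - l)))"
      unfolding R_def by (simp add: add.commute[of n j])
    then show ?thesis by simp
  qed
  have R0: "R 0 = 0" unfolding R_def using hn by (simp add: c0 Hser_def)
  show ?thesis
  proof
    assume X: "X_zero n c"
    have "R j = 0" for j
    proof (cases "j = 0")
      case True then show ?thesis using R0 by simp
    next
      case False
      show ?thesis unfolding fls_eq_iff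
      proof
        fix i :: int
        show "fls_nth (R j) i = fls_nth 0 i"
        proof (cases "i \<le> 0")
          case True
          then show ?thesis using R_low[OF c n True, of j] unfolding R_def by simp
        next
          case False
          define l where "l = nat i"
          have l: "i = int l" "l \<ge> 1" using False unfolding l_def by auto
          have "j \<ge> 1" using \<open>j \<noteq> 0\<close> by simp
          then have "X_comp n c j l = 0" using X l(2) unfolding X_zero_def by blast
          then show ?thesis unfolding X_comp_def CS l by simp
        qed
      qed
    qed
    then show "\<forall>j. Hser c (j + n) = zvar ^ n * Hser c j
                   - (\<Sum>l=1..n. fls_const (c j l) * Hser c (n - l))" using Req by blast
  next
    assume "\<forall>j. Hser c (j + n) = zvar ^ n * Hser c j
                   - (\<Sum>l=1..n. fls_const (c j l) * Hser c (n - l))"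
    then have "R j = 0" for j using Req by blast
    then show "X_zero n c" unfolding X_zero_def X_comp_def CS by simp
  qed
qed

definition Bs :: "nat \<Rightarrow> (nat \<Rightarrow> complex fls) \<Rightarrow> nat \<Rightarrow> complex fls" where
  "Bs n F m = (if m = 0 then 1 else if m < n then F m else zvar ^ n)"

function Gs :: "nat \<Rightarrow> (nat \<Rightarrow> complex fls) \<Rightarrow> nat \<Rightarrow> complex fls" where
  "Gs n F k = (if k \<le> n \<or> n = 0 then Bs n F k else
     zvar ^ n * Gs n F (k - n)
     - (\<Sum>l=1..n. fls_const (fls_nth (Gs n F (k - n)) (int l)) * Bs n F (n - l)))"
  by pat_completeness auto
termination by (relation "measure (\<lambda>(n,F,k). k)") auto

declare Gs.simps [simp del]

lemma Bs_form:
  assumes F: "F \<in> PiE {1..<n} Lform" and m: "m \<le> n" and i: "i \<le> 0"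
  shows "fls_nth (Bs n F m) i = (if i = - int m then 1 else 0)"
proof -
  consider "m = 0" | "0 < m \<and> m < n" | "m = n \<and> m \<noteq> 0" using m by linarith
  then show ?thesis
  proof cases
    case 1 then show ?thesis by (simp add: Bs_def)
  next
    case 2
    then have "F m \<in> Lform m" using F by auto
    then show ?thesis using 2 i by (auto simp: Bs_def Lform_def)
  next
    case 3 then show ?thesis by (simp add: Bs_def)
  qed
qed

lemma Gs_form:
  assumes F: "F \<in> PiE {1..<n} Lform" and n: "n \<ge> 1"
  shows "i \<le> 0 \<Longrightarrow> fls_nth (Gs n F k) i = (if i = - int k then 1 else 0)"
proof (induction k arbitrary: i rule: less_induct)
  case (less k)
  show ?case
  proof (cases "k \<le> n")
    case True
    then show ?thesis using Bs_form[OF F True less.prems] by (simp add: Gs.simps)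
  next
    case False
    define g where "g = Gs n F (k - n)"
    have e: "Gs n F k = zvar ^ n * g
      - (\<Sum>l=1..n. fls_const (fls_nth g (int l)) * Bs n F (n - l))"
      using False n unfolding g_def by (subst Gs.simps) simp
    have s: "fls_nth (\<Sum>l=1..n. fls_const (fls_nth g (int l)) * Bs n F (n - l)) i
      = (\<Sum>l=1..n. fls_nth g (int l) * (if i = - int (n - l) then 1 else 0))"
      unfolding fls_nth_sum using less.prems
      by (intro sum.cong) (auto simp: Bs_form[OF F])
    show ?thesis
    proof (cases "i + int n \<ge> 1")
      case True
      then show ?thesis unfolding e fls_minus_nth zmul_nth s sum_delta_aux[OF less.prems]
        using False by auto
    next
      case f2: False
      have "fls_nth g (i + int n) = (if i + int n = - int (k - n) then 1 else 0)"
        unfolding g_def using False n f2 by (intro less.IH) auto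
      then show ?thesis unfolding e fls_minus_nth zmul_nth s sum_delta_aux[OF less.prems]
        using False f2 by auto
    qed
  qed
qed

definition cF :: "nat \<Rightarrow> (nat \<Rightarrow> complex fls) \<Rightarrow> nat \<Rightarrow> nat \<Rightarrow> complex" where
  "cF n F k l = (if k \<ge> 1 \<and> l \<ge> 1 then fls_nth (Gs n F k) (int l) else 0)"

lemma cF_Hspace: "cF n F \<in> Hspace"
  by (simp add: cF_def Hspace_def)

lemma Hser_cF:
  assumes F: "F \<in> PiE {1..<n} Lform" and n: "n \<ge> 1"
  shows "Hser (cF n F) k = Gs n F k"
proof (cases "k = 0")
  case True
  then show ?thesis using n by (simp add: Hser_def Gs.simps Bs_def)
next
  case False
  show ?thesis unfolding fls_eq_iff
  proof
    fix i :: int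
    show "fls_nth (Hser (cF n F) k) i = fls_nth (Gs n F k) i"
    proof (cases "i \<le> 0")
      case True
      then show ?thesis using Gs_form[OF F n True, of k]
        by (simp add: Hser_nth[OF cF_Hspace])
    next
      case f: False
      then show ?thesis using False by (simp add: Hser_nth[OF cF_Hspace] cF_def)
    qed
  qed
qed

lemma cF_rec:
  assumes F: "F \<in> PiE {1..<n} Lform" and n: "n \<ge> 1"
  shows "Hser (cF n F) (j + n) = zvar ^ n * Hser (cF n F) j
                   - (\<Sum>l=1..n. fls_const (cF n F j l) * Hser (cF n F) (n - l))"
proof (cases "j = 0")
  case True
  have hn: "Hser (cF n F) n = zvar ^ n" using Hser_cF[OF F n, of n] n by (simp add: Gs.simps Bs_def)
  have h0: "Hser (cF n F) 0 = 1" by (simp add: Hser_def)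
  show ?thesis using True by (simp add: hn h0 cF_def)
next
  case False
  have "Hser (cF n F) (j + n) = Gs n F (j + n)" by (rule Hser_cF[OF F n])
  also have "\<dots> = zvar ^ n * Gs n F j
     - (\<Sum>l=1..n. fls_const (fls_nth (Gs n F j) (int l)) * Bs n F (n - l))"
    using False n by (subst Gs.simps) simp
  also have "(\<Sum>l=1..n. fls_const (fls_nth (Gs n F j) (int l)) * Bs n F (n - l))
     = (\<Sum>l=1..n. fls_const (cF n F j l) * Hser (cF n F) (n - l))"
  proof (rule sum.cong)
    fix l assume l: "l \<in> {1..n}"
    have "Bs n F (n - l) = Gs n F (n - l)" using n by (simp add: Gs.simps)
    then show "fls_const (fls_nth (Gs n F j) (int l)) * Bs n F (n - l)
       = fls_const (cF n F j l) * Hser (cF n F) (n - l)"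
      using l False by (simp add: cF_def Hser_cF[OF F n])
  qed simp
  finally show ?thesis by (simp add: Hser_cF[OF F n])
qed

lemma Hser_Lform:
  assumes c: "c \<in> Hspace" and a: "a \<ge> 1"
  shows "Hser c a \<in> Lform a"
  using a unfolding Lform_def by (auto simp: Hser_nth[OF c])

theorem mainTheorem6:
  fixes n :: nat
  assumes "n \<ge> 1"
  shows "S_set n = {c \<in> Hspace. Hser c n = zvar ^ n \<and>
            (\<forall>j. Hser c (j + n) = zvar ^ n * Hser c j
                   - (\<Sum>l=1..n. fls_const (c j l) * Hser c (n - l)))}
         \<and> bij_betw (\<lambda>c. restrict (Hser c) {1..<n}) (S_set n) (PiE {1..<n} Lform)"
proof -
  note n = assms
  have P1: "S_set n = {c \<in> Hspace. Hser c n = zvar ^ n \<and>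
            (\<forall>j. Hser c (j + n) = zvar ^ n * Hser c j
                   - (\<Sum>l=1..n. fls_const (c j l) * Hser c (n - l)))}"
    unfolding S_set_def using char[OF _ n] by blast
  have inj: "inj_on (\<lambda>c. restrict (Hser c) {1..<n}) (S_set n)"
  proof (rule inj_onI)
    fix c d assume cS: "c \<in> S_set n" and dS: "d \<in> S_set n"
      and eq: "restrict (Hser c) {1..<n} = restrict (Hser d) {1..<n}"
    have c: "c \<in> Hspace" and hc: "Hser c n = zvar ^ n"
      and rc: "\<And>j. Hser c (j + n) = zvar ^ n * Hser c j
                   - (\<Sum>l=1..n. fls_const (c j l) * Hser c (n - l))"
      using cS unfolding P1 by auto
    have d: "d \<in> Hspace" and hd: "Hser d n = zvar ^ n"
      and rd: "\<And>j. Hser d (j + n) = zvar ^ n * Hser d j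
                   - (\<Sum>l=1..n. fls_const (d j l) * Hser d (n - l))"
      using dS unfolding P1 by auto
    have H: "Hser c k = Hser d k" for k
    proof (induction k rule: less_induct)
      case (less k)
      consider "k = 0" | "0 < k \<and> k < n" | "k = n" | "k > n" by linarith
      then show ?case
      proof cases
        case 1 then show ?thesis by (simp add: Hser_def)
      next
        case 2
        then show ?thesis using fun_cong[OF eq, of k] by simp
      next
        case 3 then show ?thesis using hc hd by simp
      next
        case 4
        define j where "j = k - n"
        have k: "k = j + n" using 4 unfolding j_def by simp
        have IHj: "Hser c j = Hser d j" using less.IH 4 n unfolding j_def by simp
        have "(\<Sum>l=1..n. fls_const (c j l) * Hser c (n - l))
            = (\<Sum>l=1..n. fls_const (d j l) * Hser d (n - l))"
        proof (rule sum.cong)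
          fix l assume l: "l \<in> {1..n}"
          have "c j l = d j l" using l Hser_coeff[OF c, of l j] Hser_coeff[OF d, of l j] IHj by simp
          moreover have "Hser c (n - l) = Hser d (n - l)" using less.IH 4 l by simp
          ultimately show "fls_const (c j l) * Hser c (n - l) = fls_const (d j l) * Hser d (n - l)"
            by simp
        qed simp
        then show ?thesis unfolding k rc rd IHj by simp
      qed
    qed
    show "c = d"
    proof (intro ext)
      fix k l
      show "c k l = d k l"
      proof (cases "k \<ge> 1 \<and> l \<ge> 1")
        case True
        then show ?thesis using Hser_coeff[OF c, of l k] Hser_coeff[OF d, of l k] H by simp
      next
        case False
        then have "k = 0 \<or> l = 0" by auto
        then show ?thesis using c d by (auto simp: Hspace_def)
      qed
    qed
  qed
  have sub: "(\<lambda>c. restrict (Hser c) {1..<n}) ` S_set n \<subseteq> PiE {1..<n} Lform"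
  proof
    fix x assume "x \<in> (\<lambda>c. restrict (Hser c) {1..<n}) ` S_set n"
    then obtain c where cS: "c \<in> S_set n" and x: "x = restrict (Hser c) {1..<n}" by blast
    have c: "c \<in> Hspace" using cS unfolding S_set_def by auto
    show "x \<in> PiE {1..<n} Lform" unfolding x using Hser_Lform[OF c] by auto
  qed
  have sup: "PiE {1..<n} Lform \<subseteq> (\<lambda>c. restrict (Hser c) {1..<n}) ` S_set n"
  proof
    fix F assume F: "F \<in> PiE {1..<n} Lform"
    have cS: "cF n F \<in> S_set n"
      unfolding P1 using cF_Hspace cF_rec[OF F n] Hser_cF[OF F n, of n] n
      by (auto simp: Gs.simps Bs_def)
    have "restrict (Hser (cF n F)) {1..<n} = F"
    proof (intro ext)
      fix x show "restrict (Hser (cF n F)) {1..<n} x = F x"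
      proof (cases "x \<in> {1..<n}")
        case True
        then show ?thesis using Hser_cF[OF F n, of x] by (auto simp: Gs.simps Bs_def)
      next
        case False
        then show ?thesis using F by (auto simp: PiE_def extensional_def)
      qed
    qed
    then have e: "F = restrict (Hser (cF n F)) {1..<n}" by simp
    show "F \<in> (\<lambda>c. restrict (Hser c) {1..<n}) ` S_set n" unfolding image_iff using cS e by blast
  qed
  show ?thesis using P1 inj sub sup unfolding bij_betw_def by blast
qed

end
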